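(* Let $I$ be an open interval, $h\in\mathbb{R}$, $\Delta:I\to(0,\infty)$ and $V:I\to\mathbb{C}$ smooth, and let $R$ be a $C^2$ solution of $\Delta^{-h}\frac{d}{dr}\left(\Delta^{h+1}\frac{dR}{dr}\right)=VR$ on $I$. Let $\alpha,\beta:I\to\mathbb{C}$ be smooth with $\beta$ nowhere zero, and suppose $$\gamma:=\alpha\left(\alpha+\beta'\Delta^{h+1}\right)-\beta\Delta^{h+1}\left(\alpha'+\beta\Delta^{h}V\right)$$ is nowhere zero on $I$ (primes denote $d/dr$). Define $\chi=\alpha R+\beta\Delta^{h+1}R'$. Then $$\Delta^{-h}\frac{d}{dr}\left(\Delta^{h+1}\chi'\right)-\Delta F\chi'-U\chi=0,$$ where $F=\gamma'/\gamma$ and $U=V+\frac{\Delta^{-h}}{\beta}\left[\left(2\alpha+\beta'\Delta^{h+1}\right)'-F\left(\alpha+\beta'\Delta^{h+1}\right)\right]$. Moreover $\gamma R=(\alpha+\beta'\Delta^{h+1})\chi-\beta\Delta^{h+1}\chi'$ and $\gamma R'=-(\alpha'+\beta\Delta^hV)\chi+\alpha\chi'$. *)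

theory Defs
  imports "HOL-Analysis.Analysis"
begin

definition vd :: "(real \<Rightarrow> 'a::real_normed_vector) \<Rightarrow> real \<Rightarrow> 'a" where
  "vd f x = vector_derivative f (at x)"

definition smooth_on :: "real set \<Rightarrow> (real \<Rightarrow> 'a::real_normed_vector) \<Rightarrow> bool" where
  "smooth_on I f \<longleftrightarrow> (\<forall>n. \<forall>x\<in>I. ((vd ^^ n) f) differentiable (at x))"

definition C2_on :: "real set \<Rightarrow> (real \<Rightarrow> 'a::real_normed_vector) \<Rightarrow> bool" where
  "C2_on I f \<longleftrightarrow> (\<forall>x\<in>I. f differentiable (at x) \<and> vd f differentiable (at x))
      \<and> continuous_on I (vd (vd f))"

end

theory Submission
  imports Defs
begin


lemma hv: "f differentiable (at x) \<Longrightarrow> (f has_vector_derivative vd f x) (at x)"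
  by (simp add: vd_def vector_derivative_works)

lemma vd_at: "(f has_vector_derivative f') (at x) \<Longrightarrow> vd f x = f'"
  by (simp add: vd_def vector_derivative_at)

lemma hd_eq: "(f has_vector_derivative f') F \<Longrightarrow> f' = g \<Longrightarrow> (f has_vector_derivative g) F"
  by simp

lemma powr_diff:
  fixes \<Delta> :: "real \<Rightarrow> real"
  assumes "\<Delta> differentiable (at x)" "\<Delta> x > 0"
  shows "(\<lambda>r. complex_of_real (\<Delta> r powr c)) differentiable (at x)"
proof -
  have "(\<Delta> has_real_derivative vd \<Delta> x) (at x)"
    using hv[OF assms(1)] has_real_derivative_iff_has_vector_derivative by blast
  from DERIV_powr[OF this assms(2) DERIV_const[of c]]
  have "((\<lambda>r. \<Delta> r powr c) has_real_derivative (\<Delta> x powr c) * (0 * ln (\<Delta> x) + vd \<Delta> x * c / \<Delta> x)) (at x)" .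
  from has_vector_derivative_of_real[OF this] show ?thesis by (rule differentiableI_vector)
qed

lemma alg:
  fixes a ap b bp d dp w r rp p A B Ap Bp e g gp cz co Gp du Fv Uv V Dl :: complex
  assumes "b \<noteq> 0" "g \<noteq> 0" "A = a + bp*d" "B = ap + b*w" "p = d*rp" "g = a*A - b*d*B"
   "gp = a*Ap + ap*A - (b*d*Bp + (b*dp + bp*d)*B)" "co = ap*r + a*rp + bp*p + b*(w*r)"
   "cz = a*r + b*p" "Gp = d*(B*rp + Bp*r) + dp*(B*r) + (A*(w*r) + Ap*p)" "du = ap + Ap"
   "Fv = gp/g" "Uv = V + e/b*(du - Fv*A)" "V = e*w" "Dl = d*e"
  shows "e*Gp - Dl*Fv*co - Uv*cz = 0"
proof -
  define qg where "qg = gp / g"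
  define sb where "sb = 1 / b"
  have q: "qg * g = gp" using assms(2) by (simp add: qg_def)
  have s: "b * sb = 1" using assms(1) by (simp add: sb_def)
  have eb: "e / b = e * sb" by (simp add: sb_def)
  have "e*Gp - Dl*qg*co - (V + e * sb * (du - qg*A))*cz = 0"
    using q s assms(3-11,14,15) by algebra
  then show ?thesis using assms(12,13) unfolding eb qg_def by simp
qed

theorem mainTheorem3:
  fixes I :: "real set" and h :: real and \<Delta> :: "real \<Rightarrow> real"
    and V \<alpha> \<beta> R \<gamma> chi F U :: "real \<Rightarrow> complex"
  assumes I_open: "open I" and I_int: "is_interval I"
    and \<Delta>_pos: "\<forall>x\<in>I. \<Delta> x > 0" and \<Delta>_smooth: "smooth_on I \<Delta>"
    and V_smooth: "smooth_on I V"
    and \<alpha>_smooth: "smooth_on I \<alpha>" and \<beta>_smooth: "smooth_on I \<beta>"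
    and \<beta>_nz: "\<forall>x\<in>I. \<beta> x \<noteq> 0"
    and R_C2: "C2_on I R"
    and ode: "\<forall>x\<in>I. complex_of_real (\<Delta> x powr (-h))
                 * vd (\<lambda>r. complex_of_real (\<Delta> r powr (h+1)) * vd R r) x = V x * R x"
    and \<gamma>_def: "\<gamma> = (\<lambda>r. \<alpha> r * (\<alpha> r + vd \<beta> r * complex_of_real (\<Delta> r powr (h+1)))
                 - \<beta> r * complex_of_real (\<Delta> r powr (h+1))
                   * (vd \<alpha> r + \<beta> r * complex_of_real (\<Delta> r powr h) * V r))"
    and \<gamma>_nz: "\<forall>x\<in>I. \<gamma> x \<noteq> 0"
    and chi_def: "chi = (\<lambda>r. \<alpha> r * R r + \<beta> r * complex_of_real (\<Delta> r powr (h+1)) * vd R r)"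
    and F_def: "F = (\<lambda>r. vd \<gamma> r / \<gamma> r)"
    and U_def: "U = (\<lambda>r. V r + complex_of_real (\<Delta> r powr (-h)) / \<beta> r
                 * (vd (\<lambda>s. 2 * \<alpha> s + vd \<beta> s * complex_of_real (\<Delta> s powr (h+1))) r
                    - F r * (\<alpha> r + vd \<beta> r * complex_of_real (\<Delta> r powr (h+1)))))"
  shows "(\<forall>x\<in>I. chi differentiable (at x)
           \<and> (\<lambda>r. complex_of_real (\<Delta> r powr (h+1)) * vd chi r) differentiable (at x)
           \<and> complex_of_real (\<Delta> x powr (-h))
               * vd (\<lambda>r. complex_of_real (\<Delta> r powr (h+1)) * vd chi r) x
             - complex_of_real (\<Delta> x) * F x * vd chi x - U x * chi x = 0)
      \<and> (\<forall>x\<in>I. \<gamma> x * R x = (\<alpha> x + vd \<beta> x * complex_of_real (\<Delta> x powr (h+1))) * chi x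
                          - \<beta> x * complex_of_real (\<Delta> x powr (h+1)) * vd chi x)
      \<and> (\<forall>x\<in>I. \<gamma> x * vd R x = - (vd \<alpha> x + \<beta> x * complex_of_real (\<Delta> x powr h) * V x) * chi x
                          + \<alpha> x * vd chi x)"

proof -
  define D where "D = (\<lambda>r. complex_of_real (\<Delta> r powr (h+1)))"
  define Pw where "Pw = (\<lambda>r. complex_of_real (\<Delta> r powr h))"
  define E where "E = (\<lambda>r. complex_of_real (\<Delta> r powr (-h)))"
  define W where "W = (\<lambda>r. Pw r * V r)"
  define P where "P = (\<lambda>r. D r * vd R r)"
  define A where "A = (\<lambda>r. \<alpha> r + vd \<beta> r * D r)"
  define B where "B = (\<lambda>r. vd \<alpha> r + \<beta> r * W r)"
  define G where "G = (\<lambda>r. D r * (B r * R r) + A r * P r)"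
  have sm: "\<And>f n y. smooth_on I f \<Longrightarrow> y \<in> I \<Longrightarrow> (vd ^^ n) f differentiable (at y)"
    unfolding smooth_on_def by blast
  have da: "\<alpha> differentiable (at y)" "vd \<alpha> differentiable (at y)"
     "\<beta> differentiable (at y)" "vd \<beta> differentiable (at y)"
     "V differentiable (at y)" "\<Delta> differentiable (at y)"
     "R differentiable (at y)" "vd R differentiable (at y)" if "y \<in> I" for y
    using sm[OF \<alpha>_smooth, of y 0] sm[OF \<alpha>_smooth, of y 1] sm[OF \<beta>_smooth, of y 0]
      sm[OF \<beta>_smooth, of y 1] sm[OF V_smooth, of y 0] sm[OF \<Delta>_smooth, of y 0] R_C2 that
    by (auto simp: C2_on_def)
  have dD: "D differentiable (at y)" "Pw differentiable (at y)" if "y \<in> I" for y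
    unfolding D_def Pw_def using powr_diff[OF da(6)[OF that]] \<Delta>_pos that by auto
  have dW: "W differentiable (at y)" if "y \<in> I" for y
    unfolding W_def using dD(2)[OF that] da(5)[OF that] by (rule differentiable_mult)
  have dP: "P differentiable (at y)" if "y \<in> I" for y
    unfolding P_def using dD(1)[OF that] da(8)[OF that] by (rule differentiable_mult)
  have PwE: "Pw y * E y = 1" if "y \<in> I" for y
  proof -
    have "\<Delta> y powr h * \<Delta> y powr (-h) = 1"
      using \<Delta>_pos that by (simp add: powr_add[symmetric] less_imp_neq[symmetric])
    then show ?thesis unfolding Pw_def E_def by (metis of_real_1 of_real_mult)
  qed
  have DE: "D y * E y = complex_of_real (\<Delta> y)" if "y \<in> I" for y
  proof -
    have "\<Delta> y powr (h+1) * \<Delta> y powr (-h) = \<Delta> y"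
      using \<Delta>_pos that by (simp add: powr_add[symmetric] less_imp_neq[symmetric] less_imp_le)
    then show ?thesis unfolding D_def E_def by (metis of_real_mult)
  qed
  have VEW: "V y = E y * W y" if "y \<in> I" for y
    using PwE[OF that] unfolding W_def by (metis mult.assoc mult.commute mult_1)
  have vdP: "vd P y = W y * R y" if "y \<in> I" for y
  proof -
    have "E y * vd P y = V y * R y" using ode that unfolding E_def P_def D_def by blast
    then have "Pw y * (E y * vd P y) = Pw y * (V y * R y)" by simp
    then show ?thesis using PwE[OF that] unfolding W_def by (simp add: mult.assoc[symmetric])
  qed
  have chi_eq: "chi = (\<lambda>r. \<alpha> r * R r + \<beta> r * P r)"
    unfolding chi_def P_def D_def by (simp add: mult.assoc)
  have hchi: "(chi has_vector_derivative (vd \<alpha> y * R y + \<alpha> y * vd R y + vd \<beta> y * P y + \<beta> y * (W y * R y))) (at y)"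
    if "y \<in> I" for y
  proof -
    have "((\<lambda>r. \<alpha> r * R r + \<beta> r * P r) has_vector_derivative
      (\<alpha> y * vd R y + vd \<alpha> y * R y + (\<beta> y * vd P y + vd \<beta> y * P y))) (at y)"
      using da[OF that] dP[OF that]
      by (intro has_vector_derivative_add has_vector_derivative_mult hv) auto
    then show ?thesis unfolding chi_eq vdP[OF that] by (simp add: algebra_simps)
  qed
  have vdchi: "vd chi y = vd \<alpha> y * R y + \<alpha> y * vd R y + vd \<beta> y * P y + \<beta> y * (W y * R y)"
    if "y \<in> I" for y using vd_at[OF hchi[OF that]] .
  have dchi: "chi differentiable (at y)" if "y \<in> I" for y
    using hchi[OF that] by (rule differentiableI_vector)
  have GD: "G y = D y * vd chi y" if "y \<in> I" for y
    unfolding G_def vdchi[OF that] A_def B_def P_def by (simp add: algebra_simps)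
  have dA: "A differentiable (at y)" "B differentiable (at y)" if "y \<in> I" for y
    unfolding A_def B_def using da[OF that] dD[OF that] dW[OF that] by auto
  have hG: "(G has_vector_derivative (D x * (B x * vd R x + vd B x * R x) + vd D x * (B x * R x)
      + (A x * (W x * R x) + vd A x * P x))) (at x)" if "x \<in> I" for x
  proof -
    have "((\<lambda>r. D r * (B r * R r) + A r * P r) has_vector_derivative
      (D x * (B x * vd R x + vd B x * R x) + vd D x * (B x * R x) + (A x * vd P x + vd A x * P x))) (at x)"
      using da[OF that] dP[OF that] dD[OF that] dA[OF that]
      by (intro has_vector_derivative_add has_vector_derivative_mult hv) auto
    then show ?thesis unfolding G_def vdP[OF that] .
  qed
  have hG2: "((\<lambda>r. D r * vd chi r) has_vector_derivative (D x * (B x * vd R x + vd B x * R x) + vd D x * (B x * R x)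
      + (A x * (W x * R x) + vd A x * P x))) (at x)" if "x \<in> I" for x
    by (rule has_vector_derivative_transform_within_open[OF hG[OF that] I_open that]) (rule GD)
  have gam_eq: "\<gamma> = (\<lambda>r. \<alpha> r * A r - \<beta> r * D r * B r)"
    unfolding \<gamma>_def A_def B_def D_def W_def Pw_def by (simp add: mult.assoc)
  have hgam: "(\<gamma> has_vector_derivative (\<alpha> x * vd A x + vd \<alpha> x * A x - (\<beta> x * D x * vd B x + (\<beta> x * vd D x + vd \<beta> x * D x) * B x))) (at x)"
    if "x \<in> I" for x
    unfolding gam_eq using da[OF that] dD[OF that] dA[OF that]
    by (intro has_vector_derivative_diff has_vector_derivative_mult hv) auto
  have hA: "(A has_vector_derivative (vd \<alpha> x + (vd \<beta> x * vd D x + vd (vd \<beta>) x * D x))) (at x)"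
    if "x \<in> I" for x
    unfolding A_def using da[OF that] dD[OF that]
    by (intro has_vector_derivative_add has_vector_derivative_mult hv) auto
  have hdu: "((\<lambda>s. 2 * \<alpha> s + vd \<beta> s * D s) has_vector_derivative (2 * vd \<alpha> x + (vd \<beta> x * vd D x + vd (vd \<beta>) x * D x))) (at x)"
    if "x \<in> I" for x
    using da[OF that] dD[OF that]
    by (intro has_vector_derivative_add has_vector_derivative_mult has_vector_derivative_mult_right hv) auto
  have c2: "\<gamma> x * R x = A x * chi x - \<beta> x * D x * vd chi x" if "x \<in> I" for x
  proof -
    have "P x = D x * vd R x" by (simp add: P_def)
    then show ?thesis unfolding vdchi[OF that] unfolding gam_eq chi_eq A_def B_def P_def by algebra
  qed
  have c3: "\<gamma> x * vd R x = - B x * chi x + \<alpha> x * vd chi x" if "x \<in> I" for x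
  proof -
    have "P x = D x * vd R x" by (simp add: P_def)
    then show ?thesis unfolding vdchi[OF that] unfolding gam_eq chi_eq A_def B_def P_def by algebra
  qed
  show ?thesis
  proof (intro conjI ballI)
    fix x assume x: "x \<in> I"
    show "chi differentiable (at x)" by (rule dchi[OF x])
    show "(\<lambda>r. complex_of_real (\<Delta> r powr (h+1)) * vd chi r) differentiable (at x)"
      using differentiableI_vector[OF hG2[OF x]] unfolding D_def .
    show "complex_of_real (\<Delta> x powr (-h))
               * vd (\<lambda>r. complex_of_real (\<Delta> r powr (h+1)) * vd chi r) x
             - complex_of_real (\<Delta> x) * F x * vd chi x - U x * chi x = 0"
    proof -
      have e1: "complex_of_real (\<Delta> x powr (-h)) = E x" by (simp add: E_def)
      have e2: "vd (\<lambda>r. complex_of_real (\<Delta> r powr (h+1)) * vd chi r) x =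
         D x * (B x * vd R x + vd B x * R x) + vd D x * (B x * R x) + (A x * (W x * R x) + vd A x * P x)"
        using vd_at[OF hG2[OF x]] unfolding D_def .
      have e3: "complex_of_real (\<Delta> x) = D x * E x" using DE[OF x] by simp
      have e4: "F x = vd \<gamma> x / \<gamma> x" by (simp add: F_def)
      have e5: "U x = V x + E x / \<beta> x * (vd (\<lambda>s. 2 * \<alpha> s + vd \<beta> s * D s) x - F x * A x)"
        by (simp add: U_def E_def D_def A_def)
      show ?thesis unfolding e1 e2 e3
        apply (rule alg[where a="\<alpha> x" and ap="vd \<alpha> x" and b="\<beta> x" and bp="vd \<beta> x"
             and d="D x" and dp="vd D x" and w="W x" and r="R x" and rp="vd R x" and p="P x"
             and A="A x" and B="B x" and Ap="vd A x" and Bp="vd B x" and g="\<gamma> x" and gp="vd \<gamma> x"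
             and du="vd (\<lambda>s. 2 * \<alpha> s + vd \<beta> s * D s) x"])
        using \<beta>_nz \<gamma>_nz x apply blast
        using \<beta>_nz \<gamma>_nz x apply blast
                    apply (simp add: A_def)
                   apply (simp add: B_def)
                  apply (simp add: P_def)
                 apply (simp add: gam_eq)
                apply (rule vd_at[OF hgam[OF x]])
               apply (rule vdchi[OF x])
              apply (simp add: chi_eq)
             apply (simp add: algebra_simps)
            using vd_at[OF hdu[OF x]] vd_at[OF hA[OF x]] apply simp
           apply (rule e4)
          apply (rule e5)
         apply (rule VEW[OF x])
        apply simp
        done
    qed
  next
    fix x assume x: "x \<in> I"
    show "\<gamma> x * R x = (\<alpha> x + vd \<beta> x * complex_of_real (\<Delta> x powr (h+1))) * chi x
                          - \<beta> x * complex_of_real (\<Delta> x powr (h+1)) * vd chi x"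
      using c2[OF x] by (simp add: A_def D_def)
  next
    fix x assume x: "x \<in> I"
    show "\<gamma> x * vd R x = - (vd \<alpha> x + \<beta> x * complex_of_real (\<Delta> x powr h) * V x) * chi x
                          + \<alpha> x * vd chi x"
      using c3[OF x] by (simp add: B_def W_def Pw_def mult.assoc)
  qed
qed

end
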